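(* Let $D$ be a strongly connected digraph with $m\ge 3$ arcs. Then $rc^*(D)=src^*(D)=m$ if and only if $D$ is the directed cycle $\overrightarrow{C_m}$ of length $m$.
   Context: Digraphs are finite without loops or multiple arcs. For a strongly connected digraph $D$ and an arc-colouring $\Gamma:A(D)\to\{1,\dots,k\}$, a directed path is rainbow if its arcs have pairwise distinct colours. $\Gamma$ is rainbow connected if for every ordered pair of distinct vertices $x,y$ there is a rainbow directed $xy$-path; $rc^*(D)$ is the minimum $k$ admitting such a colouring. $\Gamma$ is strongly rainbow connected if for every ordered pair of distinct vertices $x,y$ there is a rainbow directed $xy$-path of length $d_D(x,y)$; $src^*(D)$ is the minimum such $k$. *)

theory Defs
  imports Main
begin

text \<open>A digraph is given by a vertex set V and an arc set A of ordered pairs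
  (finite, no loops; multiple arcs are impossible by construction).\<close>
definition digraph :: "'a set \<Rightarrow> ('a \<times> 'a) set \<Rightarrow> bool" where
  "digraph V A \<longleftrightarrow> finite V \<and> A \<subseteq> V \<times> V \<and> (\<forall>x. (x, x) \<notin> A)"

definition strongly_connected :: "'a set \<Rightarrow> ('a \<times> 'a) set \<Rightarrow> bool" where
  "strongly_connected V A \<longleftrightarrow> digraph V A \<and> V \<noteq> {} \<and>
     (\<forall>x\<in>V. \<forall>y\<in>V. (x, y) \<in> A\<^sup>*)"

definition path_arcs :: "'a list \<Rightarrow> ('a \<times> 'a) list" where
  "path_arcs p = zip p (tl p)"

definition dipath :: "('a \<times> 'a) set \<Rightarrow> 'a list \<Rightarrow> bool" where
  "dipath A p \<longleftrightarrow> p \<noteq> [] \<and> distinct p \<and> set (path_arcs p) \<subseteq> A"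

definition path_from_to :: "('a \<times> 'a) set \<Rightarrow> 'a list \<Rightarrow> 'a \<Rightarrow> 'a \<Rightarrow> bool" where
  "path_from_to A p x y \<longleftrightarrow> dipath A p \<and> hd p = x \<and> last p = y"

definition path_len :: "'a list \<Rightarrow> nat" where
  "path_len p = length p - 1"

definition dist :: "('a \<times> 'a) set \<Rightarrow> 'a \<Rightarrow> 'a \<Rightarrow> nat" where
  "dist A x y = (LEAST n. \<exists>p. path_from_to A p x y \<and> path_len p = n)"

definition rainbow :: "('a \<times> 'a \<Rightarrow> nat) \<Rightarrow> 'a list \<Rightarrow> bool" where
  "rainbow \<Gamma> p \<longleftrightarrow> distinct (map \<Gamma> (path_arcs p))"

definition arc_colouring :: "('a \<times> 'a) set \<Rightarrow> nat \<Rightarrow> ('a \<times> 'a \<Rightarrow> nat) \<Rightarrow> bool" where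
  "arc_colouring A k \<Gamma> \<longleftrightarrow> (\<forall>e\<in>A. \<Gamma> e \<in> {1..k})"

definition rainbow_connected :: "'a set \<Rightarrow> ('a \<times> 'a) set \<Rightarrow> ('a \<times> 'a \<Rightarrow> nat) \<Rightarrow> bool" where
  "rainbow_connected V A \<Gamma> \<longleftrightarrow>
     (\<forall>x\<in>V. \<forall>y\<in>V. x \<noteq> y \<longrightarrow> (\<exists>p. path_from_to A p x y \<and> rainbow \<Gamma> p))"

definition strongly_rainbow_connected :: "'a set \<Rightarrow> ('a \<times> 'a) set \<Rightarrow> ('a \<times> 'a \<Rightarrow> nat) \<Rightarrow> bool" where
  "strongly_rainbow_connected V A \<Gamma> \<longleftrightarrow>
     (\<forall>x\<in>V. \<forall>y\<in>V. x \<noteq> y \<longrightarrow>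
        (\<exists>p. path_from_to A p x y \<and> path_len p = dist A x y \<and> rainbow \<Gamma> p))"

definition rc :: "'a set \<Rightarrow> ('a \<times> 'a) set \<Rightarrow> nat" where
  "rc V A = (LEAST k. \<exists>\<Gamma>. arc_colouring A k \<Gamma> \<and> rainbow_connected V A \<Gamma>)"

definition src :: "'a set \<Rightarrow> ('a \<times> 'a) set \<Rightarrow> nat" where
  "src V A = (LEAST k. \<exists>\<Gamma>. arc_colouring A k \<Gamma> \<and> strongly_rainbow_connected V A \<Gamma>)"

definition is_directed_cycle :: "'a set \<Rightarrow> ('a \<times> 'a) set \<Rightarrow> nat \<Rightarrow> bool" where
  "is_directed_cycle V A m \<longleftrightarrow>
     (\<exists>f. bij_betw f {..<m} V \<and> A = {(f i, f (Suc i mod m)) | i. i < m})"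

end

theory Submission
  imports Defs
begin

lemma path_arcs_Cons: "p \<noteq> [] \<Longrightarrow> path_arcs (x # p) = (x, hd p) # path_arcs p"
  by (cases p) (auto simp: path_arcs_def)

lemma path_arcs_drop: "path_arcs (drop i p) = drop i (path_arcs p)"
  by (simp add: path_arcs_def drop_zip tl_drop)

lemma rtrancl_dipath:
  assumes "(x, y) \<in> A\<^sup>*"
  shows "\<exists>p. dipath A p \<and> hd p = x \<and> last p = y"
  using assms
proof (induction rule: converse_rtrancl_induct)
  case base
  show ?case by (rule exI[of _ "[y]"]) (simp add: dipath_def path_arcs_def)
next
  case (step x z)
  then obtain p where p: "dipath A p" "hd p = z" "last p = y" by blast
  show ?case
  proof (cases "x \<in> set p")
    case True
    then obtain i where i: "i < length p" "p ! i = x" by (auto simp: in_set_conv_nth)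
    have "dipath A (drop i p)"
      using p(1) i(1) set_drop_subset[of i "path_arcs p"]
      by (auto simp: dipath_def path_arcs_drop)
    moreover have "hd (drop i p) = x" using i by (simp add: hd_drop_conv_nth)
    moreover have "last (drop i p) = y" using i p(3) by simp
    ultimately show ?thesis by blast
  next
    case False
    have "dipath A (x # p)"
      using p step(1) False by (auto simp: dipath_def path_arcs_Cons)
    then show ?thesis using p by (auto simp: dipath_def)
  qed
qed

lemma dipath_rainbow:
  assumes C: "\<forall>e\<in>A. \<forall>e'\<in>A. \<Gamma> e = \<Gamma> e' \<longrightarrow> e = e' \<or> fst e = fst e'"
    and p: "dipath A p"
  shows "rainbow \<Gamma> p"
proof -
  let ?l = "path_arcs p"
  have sub: "set ?l \<subseteq> A" using p by (simp add: dipath_def)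
  have "map fst ?l = take (length (tl p)) p"
    by (simp add: path_arcs_def map_fst_zip_take)
  hence dfst: "distinct (map fst ?l)" using p by (simp add: dipath_def)
  hence dl: "distinct ?l" and injf: "inj_on fst (set ?l)" by (simp_all add: distinct_map)
  have "inj_on \<Gamma> (set ?l)"
  proof (rule inj_onI)
    fix e e' assume "e \<in> set ?l" "e' \<in> set ?l" "\<Gamma> e = \<Gamma> e'"
    then show "e = e'" using C sub injf by (meson inj_onD subsetD)
  qed
  then show ?thesis using dl by (simp add: rainbow_def distinct_map)
qed

lemma good_colouring:
  assumes sc: "strongly_connected V A"
    and C: "\<forall>e\<in>A. \<forall>e'\<in>A. \<Gamma> e = \<Gamma> e' \<longrightarrow> e = e' \<or> fst e = fst e'"
  shows "strongly_rainbow_connected V A \<Gamma>" "rainbow_connected V A \<Gamma>"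
proof -
  have *: "\<exists>p. path_from_to A p x y \<and> path_len p = dist A x y \<and> rainbow \<Gamma> p"
    if "x \<in> V" "y \<in> V" for x y
  proof -
    have all: "\<forall>x\<in>V. \<forall>y\<in>V. (x, y) \<in> A\<^sup>*"
      using sc unfolding strongly_connected_def by (elim conjE)
    have xy: "(x,y) \<in> A\<^sup>*" using bspec[OF bspec[OF all that(1)] that(2)] .
    obtain p where "dipath A p \<and> hd p = x \<and> last p = y" using rtrancl_dipath[OF xy] by (elim exE)
    hence "path_from_to A p x y" unfolding path_from_to_def by simp
    hence "\<exists>n p. path_from_to A p x y \<and> path_len p = n" by blast
    hence "\<exists>p. path_from_to A p x y \<and> path_len p = dist A x y"
      unfolding dist_def by (rule LeastI_ex[of "\<lambda>n. \<exists>p. path_from_to A p x y \<and> path_len p = n"])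
    then obtain q where q: "path_from_to A q x y" "path_len q = dist A x y" by blast
    moreover have "rainbow \<Gamma> q" using dipath_rainbow[OF C] q(1) by (simp add: path_from_to_def)
    ultimately show ?thesis by blast
  qed
  show "strongly_rainbow_connected V A \<Gamma>" using * by (simp add: strongly_rainbow_connected_def)
  show "rainbow_connected V A \<Gamma>"
    unfolding rainbow_connected_def
  proof (intro ballI impI)
    fix x y assume "x \<in> V" "y \<in> V" "x \<noteq> y"
    then obtain p where "path_from_to A p x y" "rainbow \<Gamma> p" using * by blast
    thus "\<exists>p. path_from_to A p x y \<and> rainbow \<Gamma> p" by blast
  qed
qed

lemma inj_colouring:
  assumes "finite B"
  shows "\<exists>\<Gamma>. (\<forall>e\<in>B. \<Gamma> e \<in> {1..card B}) \<and> inj_on \<Gamma> B"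
proof -
  obtain h where h: "bij_betw h B {0..<card B}" using ex_bij_betw_finite_nat[OF assms] by blast
  show ?thesis
    apply (rule exI[of _ "\<lambda>e. h e + 1"])
    using h bij_betwE[OF h] by (auto simp: bij_betw_def inj_on_def Suc_le_eq)
qed

lemma cycle_nth:
  assumes f: "bij_betw f {..<m} V" and Adef: "A = {(f i, f (Suc i mod m)) | i. i < m}"
    and p: "dipath A p" and hp: "hd p = f k" and k: "k < m"
  shows "t < length p \<Longrightarrow> p ! t = f ((k + t) mod m)"
proof (induction t)
  case 0
  then show ?case using hp k p by (simp add: hd_conv_nth dipath_def)
next
  case (Suc t)
  have m: "0 < m" using k by simp
  have "t < length (path_arcs p)" using Suc.prems by (simp add: path_arcs_def)
  hence "path_arcs p ! t \<in> set (path_arcs p)" by (rule nth_mem)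
  moreover have "path_arcs p ! t = (p ! t, p ! Suc t)" using Suc.prems by (simp add: path_arcs_def nth_tl)
  ultimately have "(p ! t, p ! Suc t) \<in> A" using p by (auto simp: dipath_def)
  hence "(f ((k + t) mod m), p ! Suc t) \<in> A" using Suc by simp
  then obtain i where i: "i < m" "f ((k + t) mod m) = f i" "p ! Suc t = f (Suc i mod m)"
    using Adef by auto
  have "(k + t) mod m = i" using inj_onD[OF bij_betw_imp_inj_on[OF f] i(2)] i(1) m by simp
  then show ?case using i(3) mod_Suc_eq[of "k+t" m] by simp
qed

lemma arith_aux:
  assumes a: "r < (m::nat)" "L < m" "(Suc r mod m + L) mod m = r"
  shows "L = m - 1"
proof -
  have e: "(Suc r + L) mod m = r" using a(3) by (simp add: mod_add_left_eq)
  show ?thesis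
  proof (cases "Suc r + L < m")
    case True then show ?thesis using e by simp
  next
    case False
    hence "(Suc r + L) mod m = (Suc r + L - m) mod m" by (simp add: le_mod_geq)
    also have "\<dots> = Suc r + L - m" using a False by simp
    finally show ?thesis using e a False by simp
  qed
qed

lemma cycle_lower:
  assumes cyc: "is_directed_cycle V A m" and m3: "m \<ge> 3" and cA: "card A = m"
    and col: "arc_colouring A k \<Gamma>" and rc: "rainbow_connected V A \<Gamma>"
  shows "m \<le> k"
proof (rule ccontr)
  assume "\<not> m \<le> k"
  hence km: "k < m" by simp
  obtain f where f: "bij_betw f {..<m} V" and Adef: "A = {(f i, f (Suc i mod m)) | i. i < m}"
    using cyc unfolding is_directed_cycle_def by blast
  have finA: "finite A" by (rule ccontr) (use cA m3 in simp)
  have "\<Gamma> ` A \<subseteq> {1..k}" using col by (auto simp: arc_colouring_def)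
  hence "card (\<Gamma> ` A) \<le> card {1..k}" by (intro card_mono) auto
  hence ck: "card (\<Gamma> ` A) \<le> k" by simp
  have "\<not> inj_on \<Gamma> A"
  proof
    assume "inj_on \<Gamma> A"
    hence "card (\<Gamma> ` A) = m" using cA by (simp add: card_image)
    thus False using ck km by simp
  qed
  then obtain e1 e2 where e12: "e1 \<in> A" "e2 \<in> A" "e1 \<noteq> e2" "\<Gamma> e1 = \<Gamma> e2"
    unfolding inj_on_def by blast
  have "A - {e1, e2} \<noteq> {}"
  proof
    assume "A - {e1, e2} = {}"
    hence "card A \<le> card {e1, e2}" by (intro card_mono) auto
    also have "\<dots> = 2" using e12(3) by simp
    finally show False using cA m3 by simp
  qed
  then obtain e where e: "e \<in> A" "e \<noteq> e1" "e \<noteq> e2" by blast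
  then obtain r where r: "r < m" "e = (f r, f (Suc r mod m))" using Adef by blast
  have m0: "0 < m" using m3 by simp
  have injf: "inj_on f {..<m}" using f bij_betw_imp_inj_on by blast
  have fV: "f ` {..<m} = V" using f bij_betw_imp_surj_on by blast
  have finV: "finite V" using f bij_betw_finite by blast
  have cV: "card V = m" using bij_betw_same_card[OF f] by simp
  have sr: "Suc r mod m < m" using m0 by simp
  have "Suc r mod m \<noteq> r" using r(1) m3 by (auto simp: mod_Suc)
  hence xy: "f (Suc r mod m) \<noteq> f r" using injf sr r(1) by (auto dest: inj_onD)
  have xV: "f (Suc r mod m) \<in> V" "f r \<in> V" using fV sr r(1) by auto
  obtain p where p: "path_from_to A p (f (Suc r mod m)) (f r)" "rainbow \<Gamma> p"
    using rc xV xy unfolding rainbow_connected_def by blast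
  have dp: "dipath A p" and hp: "hd p = f (Suc r mod m)" and lp: "last p = f r"
    using p by (auto simp: path_from_to_def)
  have pn: "\<And>t. t < length p \<Longrightarrow> p ! t = f ((Suc r mod m + t) mod m)"
    using cycle_nth[OF f Adef dp hp sr] by blast
  have "set p \<subseteq> V" using pn fV m0 by (auto simp: in_set_conv_nth)
  hence "card (set p) \<le> m" using card_mono[OF finV] cV by simp
  hence lenp: "length p \<le> m" using dp by (simp add: dipath_def distinct_card)
  define L where "L = length p - 1"
  have pne: "p \<noteq> []" using dp by (simp add: dipath_def)
  have "last p = p ! L" using pne by (simp add: last_conv_nth L_def)
  also have "\<dots> = f ((Suc r mod m + L) mod m)" using pn pne L_def by simp
  finally have "f ((Suc r mod m + L) mod m) = f r" using lp by simp
  hence "(Suc r mod m + L) mod m = r" using injf r(1) m0 by (auto dest: inj_onD)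
  moreover have "L < m" using lenp pne m0 L_def by (cases p) auto
  ultimately have L: "L = m - 1" using arith_aux r(1) by blast
  let ?l = "path_arcs p"
  have dl: "distinct ?l" using dp by (simp add: path_arcs_def dipath_def distinct_zipI1)
  have len_l: "length ?l = m - 1" using L L_def by (simp add: path_arcs_def)
  have "e \<notin> set ?l"
  proof
    assume "e \<in> set ?l"
    hence "f r \<in> set (map fst ?l)" using r(2) by force
    moreover have "map fst ?l = butlast p"
      by (simp add: path_arcs_def map_fst_zip_take butlast_conv_take)
    moreover have "last p \<notin> set (butlast p)"
    proof -
      have "distinct (butlast p @ [last p])" using dp pne by (simp add: dipath_def)
      thus ?thesis by simp
    qed
    ultimately show False using lp by simp
  qed
  hence sub: "set ?l \<subseteq> A - {e}" using dp by (auto simp: dipath_def)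
  have "card (set ?l) = m - 1" using distinct_card[OF dl] len_l by simp
  moreover have "card (A - {e}) = m - 1" using e(1) cA finA by simp
  ultimately have "set ?l = A - {e}" using card_subset_eq[OF _ sub] finA by simp
  hence "e1 \<in> set ?l" "e2 \<in> set ?l" using e e12 by auto
  moreover have "inj_on \<Gamma> (set ?l)" using p(2) by (simp add: rainbow_def distinct_map)
  ultimately have "e1 = e2" using e12(4) by (meson inj_onD)
  thus False using e12(3) by simp
qed


lemma functional_cycle:
  assumes sc: "strongly_connected V A" and cA: "card A = m" and m3: "m \<ge> 3"
    and fn: "\<forall>v a b. (v, a) \<in> A \<longrightarrow> (v, b) \<in> A \<longrightarrow> a = b"
  shows "is_directed_cycle V A m"
proof -
  have finV: "finite V" and AV: "A \<subseteq> V \<times> V" and noloop: "\<And>x. (x,x) \<notin> A"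
    and all: "\<forall>x\<in>V. \<forall>y\<in>V. (x, y) \<in> A\<^sup>*"
    using sc by (auto simp: strongly_connected_def digraph_def)
  have reachV: "(x, y) \<in> A\<^sup>*" if "x \<in> V" "y \<in> V" for x y
    using bspec[OF bspec[OF all that(1)] that(2)] .
  have Ane: "A \<noteq> {}" using cA m3 by auto
  then obtain a0 b0 where ab: "(a0,b0) \<in> A" by auto
  have a0b0: "a0 \<in> V" "b0 \<in> V" "a0 \<noteq> b0" using ab AV noloop by auto
  have out: "\<exists>w. (v,w) \<in> A" if "v \<in> V" for v
  proof -
    obtain u where u: "u \<in> V" "u \<noteq> v" using a0b0 by blast
    have "(v,u) \<in> A\<^sup>*" using reachV[OF that u(1)] .
    then show ?thesis using u(2) by (cases rule: converse_rtranclE) auto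
  qed
  define s where "s v = (THE w. (v,w) \<in> A)" for v
  have s: "(v, s v) \<in> A" if vV: "v \<in> V" for v
  proof -
    obtain w where w: "(v,w) \<in> A" using out[OF vV] by blast
    have "(THE w. (v,w) \<in> A) = w" using w fn by (intro the_equality) auto
    thus ?thesis using w unfolding s_def by simp
  qed
  have sA: "(v, w) \<in> A \<longleftrightarrow> v \<in> V \<and> w = s v" for v w
  proof
    assume h: "(v, w) \<in> A"
    hence "v \<in> V" using AV by auto
    thus "v \<in> V \<and> w = s v" using h s fn by blast
  next
    assume "v \<in> V \<and> w = s v" thus "(v, w) \<in> A" using s by simp
  qed
  have sV: "s v \<in> V" if "v \<in> V" for v using s[OF that] AV by auto
  have Aeq: "A = (\<lambda>v. (v, s v)) ` V" using sA by auto
  have "inj_on (\<lambda>v. (v, s v)) V" by (auto simp: inj_on_def)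
  hence cV: "card V = m" using cA Aeq card_image by metis
  have reach: "\<exists>k. y = (s ^^ k) x" if "(x,y) \<in> A\<^sup>*" for x y
    using that
  proof (induction rule: rtrancl_induct)
    case base show ?case by (rule exI[of _ 0]) simp
  next
    case (step y z)
    then obtain k where k: "y = (s^^k) x" by blast
    have "z = s y" using step(2) sA by blast
    hence "z = (s^^(Suc k)) x" using k by simp
    thus ?case by blast
  qed
  have v0: "a0 \<in> V" using a0b0 by simp
  define v where "v = a0"
  have vV: "v \<in> V" using v0 v_def by simp
  have powV: "(s^^n) w \<in> V" if "w \<in> V" for n w using that by (induction n) (auto simp: sV)
  have "\<exists>p. 0 < p \<and> (s^^p) v = v"
  proof -
    obtain k where "v = (s^^k) (s v)" using reach[OF reachV[OF sV[OF vV] vV]] by blast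
    hence "(s^^(Suc k)) v = v" by (metis funpow_Suc_right comp_apply)
    thus ?thesis by blast
  qed
  define p where "p = (LEAST p. 0 < p \<and> (s^^p) v = v)"
  have p: "0 < p" "(s^^p) v = v"
    using LeastI_ex[OF \<open>\<exists>p. 0 < p \<and> (s^^p) v = v\<close>] unfolding p_def by auto
  have pmin: "\<not> (0 < q \<and> (s^^q) v = v)" if "q < p" for q
    using not_less_Least[OF that[unfolded p_def]] unfolding p_def .
  have pmul: "(s^^(p*q)) v = v" for q
  proof (induction q)
    case 0 show ?case by simp
  next
    case (Suc q)
    have "(s^^(p * Suc q)) v = (s^^p) ((s^^(p*q)) v)" by (simp add: funpow_add)
    thus ?case using Suc p(2) by simp
  qed
  have pmod: "(s^^n) v = (s^^(n mod p)) v" for n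
  proof -
    have "(s^^n) v = (s^^(n mod p + p * (n div p))) v" by simp
    also have "\<dots> = (s^^(n mod p)) ((s^^(p*(n div p))) v)" by (simp only: funpow_add comp_apply)
    finally show ?thesis using pmul by simp
  qed
  have noteq: "False" if ab: "a < b" "b < p" "(s^^a) v = (s^^b) v" for a b
  proof -
    have "(s^^(p - b + a)) v = (s^^(p-b)) ((s^^a) v)" by (simp add: funpow_add)
    also have "\<dots> = (s^^(p-b)) ((s^^b) v)" using ab by simp
    also have "\<dots> = (s^^(p - b + b)) v" by (simp add: funpow_add)
    also have "\<dots> = v" using ab p by simp
    finally have eq: "(s^^(p - b + a)) v = v" .
    have "p - b + a < p" "0 < p - b + a" using ab by linarith+
    thus False using pmin[of "p - b + a"] eq by blast
  qed
  define f where "f i = (s^^i) v" for i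
  have injp: "inj_on f {..<p}"
  proof (rule inj_onI)
    fix a b assume ab: "a \<in> {..<p}" "b \<in> {..<p}" "f a = f b"
    show "a = b"
    proof (rule ccontr)
      assume "a \<noteq> b"
      hence "a < b \<or> b < a" by arith
      thus False using noteq ab unfolding f_def by (metis lessThan_iff)
    qed
  qed
  have imgp: "f ` {..<p} = V"
  proof
    show "f ` {..<p} \<subseteq> V" using powV vV by (auto simp: f_def)
    show "V \<subseteq> f ` {..<p}"
    proof
      fix y assume "y \<in> V"
      then obtain k where "y = (s^^k) v" using reach[OF reachV[OF vV]] by blast
      hence "y = f (k mod p)" using pmod unfolding f_def by simp
      moreover have "k mod p < p" using p(1) by simp
      ultimately show "y \<in> f ` {..<p}" by blast
    qed
  qed
  have "card V = p" using card_image[OF injp] imgp by simp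
  hence pm: "p = m" using cV by simp
  have bij: "bij_betw f {..<m} V" using injp imgp pm by (simp add: bij_betw_def)
  have sf: "s (f i) = f (Suc i mod m)" for i
    using pmod[of "Suc i"] pm unfolding f_def by simp
  have "A = (\<lambda>v. (v, s v)) ` (f ` {..<m})" using Aeq imgp pm by simp
  also have "\<dots> = {(f i, f (Suc i mod m)) | i. i < m}" using sf by auto
  finally show ?thesis unfolding is_directed_cycle_def using bij by blast
qed

lemma src_rc: "strongly_rainbow_connected V A \<Gamma> \<Longrightarrow> rainbow_connected V A \<Gamma>"
  unfolding strongly_rainbow_connected_def rainbow_connected_def by blast

theorem corollary5:
  fixes V :: "'a set" and A :: "('a \<times> 'a) set" and m :: nat
  assumes "strongly_connected V A"
    and "card A = m"
    and "m \<ge> 3"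
  shows "(rc V A = m \<and> src V A = m) \<longleftrightarrow> is_directed_cycle V A m"
proof -
  have finA: "finite A" by (rule ccontr) (use assms(2,3) in simp)
  show ?thesis
  proof
    assume hm: "rc V A = m \<and> src V A = m"
    show "is_directed_cycle V A m"
    proof (cases "\<forall>v a b. (v, a) \<in> A \<longrightarrow> (v, b) \<in> A \<longrightarrow> a = b")
      case True thus ?thesis using functional_cycle assms by blast
    next
      case False
      then obtain v a b where vab: "(v,a) \<in> A" "(v,b) \<in> A" "a \<noteq> b" by blast
      let ?B = "A - {(v,b)}"
      have cB: "card ?B = m - 1" using vab finA assms(2) by simp
      obtain h where h: "\<forall>e\<in>?B. h e \<in> {1..card ?B}" "inj_on h ?B"
        using inj_colouring[of ?B] finA by auto
      define \<Gamma> where "\<Gamma> e = (if e = (v,b) then h (v,a) else h e)" for e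
      have va: "(v,a) \<in> ?B" using vab by simp
      have col: "arc_colouring A (m-1) \<Gamma>"
        unfolding arc_colouring_def
      proof
        fix e assume "e \<in> A"
        thus "\<Gamma> e \<in> {1..m-1}" using h(1) va cB unfolding \<Gamma>_def by (cases "e = (v,b)") auto
      qed
      have C: "\<forall>e\<in>A. \<forall>e'\<in>A. \<Gamma> e = \<Gamma> e' \<longrightarrow> e = e' \<or> fst e = fst e'"
      proof (intro ballI impI)
        fix e e' assume e: "e \<in> A" "e' \<in> A" "\<Gamma> e = \<Gamma> e'"
        show "e = e' \<or> fst e = fst e'"
        proof (cases "e = (v,b)")
          case True
          show ?thesis
          proof (cases "e' = (v,b)")
            case True thus ?thesis using \<open>e = (v,b)\<close> by simp
          next
            case False
            hence "h (v,a) = h e'" using e True unfolding \<Gamma>_def by simp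
            hence "e' = (v,a)" using h(2) va e(2) False by (auto dest: inj_onD)
            thus ?thesis using True by simp
          qed
        next
          case False
          show ?thesis
          proof (cases "e' = (v,b)")
            case True
            hence "h e = h (v,a)" using e False unfolding \<Gamma>_def by simp
            hence "e = (v,a)" using h(2) va e(1) False by (auto dest: inj_onD)
            thus ?thesis using True by simp
          next
            case False2: False
            hence "h e = h e'" using e False unfolding \<Gamma>_def by simp
            thus ?thesis using h(2) e False False2 by (auto dest: inj_onD)
          qed
        qed
      qed
      have "rainbow_connected V A \<Gamma>" using good_colouring(2)[OF assms(1) C] .
      hence "rc V A \<le> m - 1" unfolding rc_def using col by (intro Least_le) blast
      thus ?thesis using hm assms(3) by simp
    qed
  next
    assume cyc: "is_directed_cycle V A m"
    obtain h where h: "\<forall>e\<in>A. h e \<in> {1..card A}" "inj_on h A" using inj_colouring[OF finA] by blast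
    have col: "arc_colouring A m h" using h assms(2) by (simp add: arc_colouring_def)
    have C: "\<forall>e\<in>A. \<forall>e'\<in>A. h e = h e' \<longrightarrow> e = e' \<or> fst e = fst e'"
      using h(2) by (auto simp: inj_on_def)
    note g = good_colouring[OF assms(1) C]
    have "rc V A = m" unfolding rc_def
    proof (rule Least_equality)
      show "\<exists>\<Gamma>. arc_colouring A m \<Gamma> \<and> rainbow_connected V A \<Gamma>" using col g by blast
      show "m \<le> k" if "\<exists>\<Gamma>. arc_colouring A k \<Gamma> \<and> rainbow_connected V A \<Gamma>" for k
        using that cycle_lower[OF cyc assms(3) assms(2)] by blast
    qed
    moreover have "src V A = m" unfolding src_def
    proof (rule Least_equality)
      show "\<exists>\<Gamma>. arc_colouring A m \<Gamma> \<and> strongly_rainbow_connected V A \<Gamma>" using col g by blast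
      show "m \<le> k" if "\<exists>\<Gamma>. arc_colouring A k \<Gamma> \<and> strongly_rainbow_connected V A \<Gamma>" for k
        using that cycle_lower[OF cyc assms(3) assms(2)] src_rc by blast
    qed
    ultimately show "rc V A = m \<and> src V A = m" by simp
  qed
qed

end
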